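(* Let $\mathbf A$ be a pseudo-Kleene lattice, and define $x\odot y=0$ if $x\leq y'$ and $x\odot y=y\land(x\lor y')$ otherwise; $x\to y=1$ if $x\leq y$ and $x\to y=x'\lor(x\land y)$ otherwise. The following are equivalent: (1) $R(\mathbf A)=(A,\land,\lor,\odot,\to,0,1)$ is a left-residuated $\ell$-groupoid; (2) $\mathbf A$ is super-paraorthomodular and, for all $x,y\in A$, if $x\not\leq y$ then $x\leq y\lor y'$ or $y'\leq x\lor y$.
   Context: A pseudo-Kleene lattice is an algebra $(A,\land,\lor,{}',0,1)$ that is a bounded lattice with an antitone involution ${}'$ ($x\leq y\Rightarrow y'\leq x'$, $x''=x$) satisfying $x\land x'\leq y\lor y'$. It is super-paraorthomodular if for all $x,y$: (SP1) $x\leq y$ and $x'\land y=(x\land x')\lor(y\land y')$ imply $y\land(x\lor x')=x\lor(y\land y')$; (SP2) $x\leq y$ implies $(x\land x')\lor(y\land y')=(x'\land y)\land(x'\land y)'$. A left-residuated $\ell$-groupoid is an algebra $(A,\land,\lor,\odot,\to,0,1)$ such that $(A,\land,\lor,0,1)$ is a bounded lattice, $x\odot 1=x=1\odot x$ for all $x$, and $x\odot y\leq z$ iff $x\leq y\to z$ for all $x,y,z$. *)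

theory Defs
  imports Main
begin

text \<open>A bounded lattice is modelled by the type class bounded_lattice
  (0 = bot, 1 = top, meet = inf, join = sup). The unary operation x' is a
  function n.\<close>

definition pseudo_kleene :: "('a::bounded_lattice \<Rightarrow> 'a) \<Rightarrow> bool" where
  "pseudo_kleene n \<longleftrightarrow>
     (\<forall>x y. x \<le> y \<longrightarrow> n y \<le> n x) \<and>
     (\<forall>x. n (n x) = x) \<and>
     (\<forall>x y. inf x (n x) \<le> sup y (n y))"

definition super_paraorthomodular :: "('a::bounded_lattice \<Rightarrow> 'a) \<Rightarrow> bool" where
  "super_paraorthomodular n \<longleftrightarrow>
     (\<forall>x y. x \<le> y \<and> inf (n x) y = sup (inf x (n x)) (inf y (n y))
            \<longrightarrow> inf y (sup x (n x)) = sup x (inf y (n y))) \<and>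
     (\<forall>x y. x \<le> y \<longrightarrow>
            sup (inf x (n x)) (inf y (n y)) = inf (inf (n x) y) (n (inf (n x) y)))"

definition R_mult :: "('a::bounded_lattice \<Rightarrow> 'a) \<Rightarrow> 'a \<Rightarrow> 'a \<Rightarrow> 'a" where
  "R_mult n x y = (if x \<le> n y then bot else inf y (sup x (n y)))"

definition R_imp :: "('a::bounded_lattice \<Rightarrow> 'a) \<Rightarrow> 'a \<Rightarrow> 'a \<Rightarrow> 'a" where
  "R_imp n x y = (if x \<le> y then top else sup (n x) (inf x y))"

definition left_residuated_l_groupoid ::
  "('a::bounded_lattice \<Rightarrow> 'a \<Rightarrow> 'a) \<Rightarrow> ('a \<Rightarrow> 'a \<Rightarrow> 'a) \<Rightarrow> bool" where
  "left_residuated_l_groupoid m r \<longleftrightarrow>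
     (\<forall>x. m x top = x \<and> m top x = x) \<and>
     (\<forall>x y z. m x y \<le> z \<longleftrightarrow> x \<le> r y z)"

end

theory Submission
  imports Defs
begin

context
  fixes n :: "'a::bounded_lattice \<Rightarrow> 'a"
  assumes pk: "pseudo_kleene n"
begin

lemma anti: "x \<le> y \<Longrightarrow> n y \<le> n x"
  using pk unfolding pseudo_kleene_def by blast

lemma inv[simp]: "n (n x) = x"
  using pk unfolding pseudo_kleene_def by blast

lemma kl: "inf x (n x) \<le> sup y (n y)"
  using pk unfolding pseudo_kleene_def by blast

lemma le_iff: "n x \<le> n y \<longleftrightarrow> y \<le> x"
  by (metis anti inv)

lemma le_n: "x \<le> n y \<longleftrightarrow> y \<le> n x"
  by (metis le_iff inv)

lemma n_le: "n x \<le> y \<longleftrightarrow> n y \<le> x"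
  by (metis le_iff inv)

lemma n_sup[simp]: "n (sup x y) = inf (n x) (n y)"
proof (rule antisym)
  show "n (sup x y) \<le> inf (n x) (n y)" by (simp add: anti)
  show "inf (n x) (n y) \<le> n (sup x y)"
    by (metis anti inf_le1 inf_le2 inv sup_least)
qed

lemma n_inf[simp]: "n (inf x y) = sup (n x) (n y)"
  by (metis inv n_sup)

lemma n_eq_iff: "n x = n y \<longleftrightarrow> x = y"
  by (metis inv)

definition PP :: bool where
  "PP \<longleftrightarrow> (\<forall>a b. a \<le> b \<longrightarrow> a \<noteq> b \<longrightarrow> \<not> n a \<le> b \<longrightarrow> b \<le> sup a (inf (n a) b))"

lemma L1a:
  assumes "left_residuated_l_groupoid (R_mult n) (R_imp n)"
  shows PP
  unfolding PP_def
proof (intro allI impI)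
  fix a b :: 'a
  assume ab: "a \<le> b" "a \<noteq> b" "\<not> n a \<le> b"
  have res: "R_mult n b (n a) \<le> inf (n a) b \<longleftrightarrow> b \<le> R_imp n (n a) (inf (n a) b)"
    using assms unfolding left_residuated_l_groupoid_def by blast
  have "\<not> b \<le> a" using ab by auto
  then have m: "R_mult n b (n a) = inf (n a) b"
    using ab(1) by (simp add: R_mult_def sup.absorb1)
  have "\<not> n a \<le> inf (n a) b" using ab(3) by simp
  then have r: "R_imp n (n a) (inf (n a) b) = sup a (inf (n a) b)"
    by (simp add: R_imp_def inf.absorb2)
  show "b \<le> sup a (inf (n a) b)" using res m r by simp
qed

lemma L1b:
  assumes P: PP
  shows "left_residuated_l_groupoid (R_mult n) (R_imp n)"
  unfolding left_residuated_l_groupoid_def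
proof (intro conjI allI)
  fix x :: 'a
  have "n top = bot" by (metis bot_unique inv le_iff top_greatest) 
  then show "R_mult n x top = x" by (auto simp add: R_mult_def bot_unique)
  show "R_mult n top x = x"
  proof (cases "top \<le> n x")
    case True
    then have "n x = top" by (simp add: top_unique)
    then have "x = bot" by (metis inv le_iff bot_least top_unique)
    then show ?thesis using True by (simp add: R_mult_def)
  next
    case False
    then show ?thesis by (simp add: R_mult_def)
  qed
next
  fix x y z :: 'a
  show "R_mult n x y \<le> z \<longleftrightarrow> x \<le> R_imp n y z"
  proof (cases "y \<le> z")
    case True
    have "R_mult n x y \<le> y" by (simp add: R_mult_def)
    then show ?thesis using True by (simp add: R_imp_def)
  next
    case yz: False
    show ?thesis
    proof (cases "x \<le> n y")
      case True
      then show ?thesis using yz by (simp add: R_mult_def R_imp_def le_supI1)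
    next
      case xy: False
      have m: "R_mult n x y = inf y (sup x (n y))" using xy by (simp add: R_mult_def)
      have r: "R_imp n y z = sup (n y) (inf y z)" using yz by (simp add: R_imp_def)
      show ?thesis
      proof
        assume h: "R_mult n x y \<le> z"
        define b where "b = sup x (n y)"
        have h2: "inf y b \<le> z" using h m b_def by simp
        have 1: "n y \<le> b" by (simp add: b_def)
        have 2: "n y \<noteq> b" using xy b_def by (metis sup_ge1)
        have 3: "\<not> n (n y) \<le> b"
        proof
          assume "n (n y) \<le> b"
          then have "inf y b = y" by (simp add: inf.absorb1)
          then show False using h2 yz by simp
        qed
        have "b \<le> sup (n y) (inf (n (n y)) b)" using P 1 2 3 unfolding PP_def by blast
        also have "\<dots> \<le> sup (n y) (inf y z)" using h2 by (simp add: le_supI2)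
        finally show "x \<le> R_imp n y z" using r b_def by simp
      next
        assume h: "x \<le> R_imp n y z"
        define c where "c = inf y z"
        have h2: "x \<le> sup (n y) c" using h r c_def by simp
        have 1: "n y \<le> n c" by (simp add: c_def)
        have 2: "n y \<noteq> n c"
        proof
          assume "n y = n c"
          then have "y = c" by (simp add: n_eq_iff)
          then show False using yz c_def by (metis inf.cobounded2)
        qed
        have 3: "\<not> n (n y) \<le> n c"
        proof
          assume "n (n y) \<le> n c"
          then have "c \<le> n y" by (simp add: le_n)
          then show False using h2 xy by (simp add: sup.absorb1)
        qed
        have "n c \<le> sup (n y) (inf (n (n y)) (n c))" using P 1 2 3 unfolding PP_def by blast
        then have 4: "inf y (sup (n y) c) \<le> c"
          using le_iff by (metis inv n_inf n_sup)
        have "inf y (sup x (n y)) \<le> inf y (sup (n y) c)"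
          using h2 by (meson inf_mono order_refl sup.cobounded1 sup_least)
        also have "\<dots> \<le> z" using 4 c_def by (meson inf.boundedE order_trans)
        finally show "R_mult n x y \<le> z" using m by simp
      qed
    qed
  qed
qed

lemma L2c:
  assumes P: PP and xy: "\<not> x \<le> y"
  shows "x \<le> sup y (n y) \<or> n y \<le> sup x y"
proof (cases "n y \<le> sup x y")
  case True then show ?thesis by simp
next
  case False
  have 1: "y \<le> sup x y" by simp
  have 2: "y \<noteq> sup x y" using xy by (metis sup.cobounded1)
  have "sup x y \<le> sup y (inf (n y) (sup x y))" using P 1 2 False unfolding PP_def by blast
  also have "\<dots> \<le> sup y (n y)" by (simp add: le_supI2)
  finally show ?thesis by simp
qed

lemma L2sp1:
  assumes P: PP and xy: "x \<le> y"
    and e: "inf (n x) y = sup (inf x (n x)) (inf y (n y))"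
  shows "inf y (sup x (n x)) = sup x (inf y (n y))"
proof (rule antisym)
  have k: "inf y (n y) \<le> sup x (n x)" by (rule kl)
  have x2: "x \<le> sup x (n x)" by simp
  show "sup x (inf y (n y)) \<le> inf y (sup x (n x))"
    using xy k x2 by simp
  have A: "inf x (n x) \<le> x" by simp
  show "inf y (sup x (n x)) \<le> sup x (inf y (n y))"
  proof (cases "x = y")
    case True
    have "inf y (sup x (n x)) \<le> y" by (rule inf_le1)
    then show ?thesis using True by (simp add: le_supI1)
  next
    case ne: False
    show ?thesis
    proof (cases "n x \<le> y")
      case True
      then have "n x = sup (inf x (n x)) (inf y (n y))" using e by (simp add: inf.absorb1)
      also have "\<dots> \<le> sup x (inf y (n y))" using A by (rule sup_mono) simp
      finally have "sup x (n x) \<le> sup x (inf y (n y))" by simp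
      then show ?thesis by (meson inf_le2 order_trans)
    next
      case False
      have "y \<le> sup x (inf (n x) y)" using P xy ne False unfolding PP_def by blast
      also have "\<dots> = sup x (sup (inf x (n x)) (inf y (n y)))" using e by simp
      also have "\<dots> \<le> sup x (inf y (n y))" using A by (simp add: le_supI1)
      finally show ?thesis by (meson inf_le1 order_trans)
    qed
  qed
qed

lemma L2sp2:
  assumes P: PP and xy: "x \<le> y"
  shows "sup (inf x (n x)) (inf y (n y)) = inf (inf (n x) y) (n (inf (n x) y))"
proof (rule antisym)
  have "n y \<le> n x" using xy by (simp add: anti)
  then show "sup (inf x (n x)) (inf y (n y)) \<le> inf (inf (n x) y) (n (inf (n x) y))"
  proof -
    have a1: "inf x (n x) \<le> inf (inf (n x) y) (sup x (n y))"
      using xy by (meson inf_le1 inf_le2 le_inf_iff le_supI1 order_trans)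
    have a2: "inf y (n y) \<le> inf (inf (n x) y) (sup x (n y))"
      using \<open>n y \<le> n x\<close> by (meson inf_le1 inf_le2 le_inf_iff le_supI2 order_trans)
    show ?thesis using a1 a2 by simp
  qed
  define w where "w = inf (n x) y"
  have key: "inf w (n w) \<le> sup (inf x (n x)) (inf y (n y))"
  proof (cases "x = y")
    case True
    have "w \<le> x" "w \<le> n x" using True unfolding w_def by auto
    then have "inf w (n w) \<le> inf x (n x)" by (meson inf_le1 le_inf_iff order_trans)
    then show ?thesis by (simp add: le_supI1)
  next
    case ne: False
    show ?thesis
    proof (cases "n x \<le> y")
      case True
      then have "w = n x" unfolding w_def by (simp add: inf.absorb1)
      then show ?thesis by (simp add: inf_commute le_supI1)
    next
      case False
      have "y \<le> sup x w" using P xy ne False unfolding PP_def w_def by blast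
      then have "n (sup x w) \<le> n y" by (rule anti)
      then have ny: "inf (n x) (n w) \<le> n y" by simp
      have "w \<le> n x" "w \<le> y" unfolding w_def by auto
      then have "inf w (n w) \<le> inf y (n y)" using ny
        by (meson inf_mono le_infI order_refl order_trans inf_le1 inf_le2)
      then show ?thesis by (simp add: le_supI2)
    qed
  qed
  then show "inf (inf (n x) y) (n (inf (n x) y)) \<le> sup (inf x (n x)) (inf y (n y))"
    unfolding w_def .
qed

lemma L3:
  assumes sp: "super_paraorthomodular n"
    and c: "\<And>x y. \<not> x \<le> y \<Longrightarrow> x \<le> sup y (n y) \<or> n y \<le> sup x y"
  shows PP
  unfolding PP_def
proof (intro allI impI)
  fix a b :: 'a
  assume ab: "a \<le> b" "a \<noteq> b" "\<not> n a \<le> b"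
  have sp1: "\<And>x y. x \<le> y \<Longrightarrow> inf (n x) y = sup (inf x (n x)) (inf y (n y))
            \<Longrightarrow> inf y (sup x (n x)) = sup x (inf y (n y))"
    using sp unfolding super_paraorthomodular_def by blast
  have sp2: "\<And>x y. x \<le> y \<Longrightarrow>
            sup (inf x (n x)) (inf y (n y)) = inf (inf (n x) y) (n (inf (n x) y))"
    using sp unfolding super_paraorthomodular_def by blast
  define w where "w = inf (n a) b"
  define z where "z = sup a w"
  have "\<not> b \<le> a" using ab by auto
  then have baa: "b \<le> sup a (n a)" using c[of b a] ab by (simp add: sup.absorb1)
  have zb: "z \<le> b" unfolding z_def w_def using ab by simp
  have az: "a \<le> z" unfolding z_def by simp
  have wz: "w \<le> z" unfolding z_def by simp
  show "b \<le> sup a (inf (n a) b)"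
  proof (cases "b \<le> z")
    case True then show ?thesis unfolding z_def w_def .
  next
    case bz: False
    have zn: "n z = inf (n a) (n w)" unfolding z_def by simp
    have "b \<le> sup z (n z) \<or> n z \<le> b"
      using c[OF bz] zb by (simp add: sup.absorb1)
    then show ?thesis
    proof
      assume b1: "b \<le> sup z (n z)"
      define u where "u = inf (n z) b"
      have u: "u = inf w (n w)" unfolding u_def zn w_def
        by (simp add: inf.assoc inf.commute inf.left_commute)
      have "u \<le> n u" unfolding u by (simp add: le_infI1 le_supI2 inf_commute)
      then have uu: "inf u (n u) = u" by (simp add: inf.absorb1)
      have "inf (n z) b = sup (inf z (n z)) (inf b (n b))"
        using sp2[OF zb] uu unfolding u_def by simp
      then have e: "inf b (sup z (n z)) = sup z (inf b (n b))" using sp1[OF zb] by blast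
      have "inf b (n b) \<le> w" unfolding w_def using ab(1) anti
        by (meson inf_le1 inf_le2 le_inf_iff order_trans)
      then have "sup z (inf b (n b)) \<le> z" using wz by simp
      then have "b \<le> z" using e b1 by (metis inf.absorb1)
      then show ?thesis using bz by simp
    next
      assume b2: "n z \<le> b"
      have "n z \<le> n a" unfolding zn by simp
      then have nzw: "n z \<le> w" using b2 unfolding w_def by simp
      then have nzz: "n z \<le> z" using wz by simp
      have "\<not> n a \<le> n z" using b2 ab(3) by (meson order_trans)
      then have "n a \<le> sup (n z) (n (n z)) \<or> n (n z) \<le> sup (n a) (n z)" using c by blast
      then have "n a \<le> z \<or> z \<le> n a"
        using nzz \<open>n z \<le> n a\<close> by (simp add: sup.absorb1 sup.absorb2 sup_commute)
      then show ?thesis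
      proof
        assume "n a \<le> z"
        then have "sup a (n a) \<le> z" using az by simp
        then show ?thesis using baa bz by (meson order_trans)
      next
        assume "z \<le> n a"
        then have "a \<le> n a" using az by simp
        then have "b \<le> n a" using baa by (simp add: sup.absorb2)
        then have "w = b" unfolding w_def by (simp add: inf.absorb2)
        then show ?thesis using wz bz by simp
      qed
    qed
  qed
qed

end

theorem theorem3p11:
  fixes n :: "'a::bounded_lattice \<Rightarrow> 'a"
  assumes "pseudo_kleene n"
  shows "left_residuated_l_groupoid (R_mult n) (R_imp n) \<longleftrightarrow>
    (super_paraorthomodular n \<and>
     (\<forall>x y. \<not> x \<le> y \<longrightarrow> x \<le> sup y (n y) \<or> n y \<le> sup x y))"
proof
  assume h: "left_residuated_l_groupoid (R_mult n) (R_imp n)"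
  have P: "PP n" using L1a[OF assms h] .
  show "super_paraorthomodular n \<and>
     (\<forall>x y. \<not> x \<le> y \<longrightarrow> x \<le> sup y (n y) \<or> n y \<le> sup x y)"
    unfolding super_paraorthomodular_def
    using L2c[OF assms P] L2sp1[OF assms P] L2sp2[OF assms P] by blast
next
  assume h: "super_paraorthomodular n \<and>
     (\<forall>x y. \<not> x \<le> y \<longrightarrow> x \<le> sup y (n y) \<or> n y \<le> sup x y)"
  then have P: "PP n" using L3[OF assms] by blast
  show "left_residuated_l_groupoid (R_mult n) (R_imp n)" using L1b[OF assms P] .
qed

end
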